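(* For every object $\mathcal{X}=(A_0,A_1,A_\infty,\widetilde{M_0},\widetilde{M_\infty})$ of the category $\mathcal{C}$ of connections there exist finite subsets $E_0\subset D(0,1)\setminus\{0\}$ and $E_\infty\subset\mathbb{C}\setminus\overline{D}(0,1)$ such that $\mathcal{X}$ is an object of $\mathcal{C}_{E_0,E_\infty}$, i.e. $S(\widetilde{M_0})\subset\widetilde{E_0}$ and $S(\widetilde{M_\infty})\subset\widetilde{E_\infty}$.
   Context: Fix an integer $p\ge2$. Let $\widetilde{\mathbb{C}^\star}=\{(re^{ib},b): r>0, b\in\mathbb{R}\}$, $\widetilde{\log}(re^{ib},b)=\log r+ib$, $\pi=\exp\circ\widetilde{\log}$, $\phi_p(re^{ib},b)=(r^pe^{ipb},pb)$; $\phi_p(W)=W\circ\phi_p$, $\pi^\star W=W\circ\pi$. $\Sigma_0=\{(re^{ib},b):0<r<1\}$, $\Sigma_\infty=\{(re^{ib},b):r>1\}$. An object of $\mathcal{C}$ of rank $n$ is a tuple $(A_0,A_1,A_\infty,\widetilde{M_0},\widetilde{M_\infty})$ with $A_i\in GL_n(\mathbb{C})$, $\widetilde{M_0}\in GL_n(\mathcal{M}(\Sigma_0))$, $\widetilde{M_\infty}\in GL_n(\mathcal{M}(\Sigma_\infty))$, $\phi_p(\widetilde{M_0})=A_1\widetilde{M_0}A_0^{-1}$, $\phi_p(\widetilde{M_\infty})=A_1\widetilde{M_\infty}A_\infty^{-1}$, such that there exist $\widetilde{W_1}\in GL_n(\mathcal{M}(\widetilde{\mathbb{C}^\star}))$,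 $W_0\in GL_n(\mathcal{M}(D(0,1)))$, $W_\infty\in GL_n(\mathcal{M}(\mathbb{P}^1(\mathbb{C})\setminus\overline{D}(0,1)))$ with $\widetilde{W_1}\widetilde{M_0}=\pi^\star W_0$ and $\widetilde{W_1}\widetilde{M_\infty}=\pi^\star W_\infty$. For finite $E\subset\mathbb{C}^\star$, $E^{p^k}=\{z^{p^k}:z\in E\}$ ($k\ge0$), $E^{p^k}=\{z:z^{p^{-k}}\in E\}$ ($k<0$), $\widetilde E=\pi^{-1}(\bigcup_{k\in\mathbb{Z}}E^{p^k})$. The singular locus $S(M)$ of a meromorphic matrix $M$ is the set of its poles together with the zeros of $\det M$. *)

theory Defs
  imports "HOL-Complex_Analysis.Complex_Analysis"
begin

definition ctilde :: "(complex \<times> real) set" where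
  "ctilde = {(z, b). \<exists>r>0. z = complex_of_real r * cis b}"

definition ltilde :: "complex \<times> real \<Rightarrow> complex" where
  "ltilde x = complex_of_real (ln (norm (fst x))) + \<i> * complex_of_real (snd x)"

definition lexp :: "complex \<Rightarrow> complex \<times> real" where
  "lexp w = (exp w, Im w)"

definition piT :: "complex \<times> real \<Rightarrow> complex" where
  "piT x = fst x"

definition phiT :: "nat \<Rightarrow> complex \<times> real \<Rightarrow> complex \<times> real" where
  "phiT p x = (fst x ^ p, real p * snd x)"

definition Sigma0 :: "(complex \<times> real) set" where
  "Sigma0 = {x \<in> ctilde. norm (fst x) < 1}"

definition SigmaInf :: "(complex \<times> real) set" where
  "SigmaInf = {x \<in> ctilde. norm (fst x) > 1}"

definition mero_cov :: "(complex \<times> real \<Rightarrow> complex) \<Rightarrow> (complex \<times> real) set \<Rightarrow> bool" where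
  "mero_cov f U \<longleftrightarrow> (f \<circ> lexp) meromorphic_on (ltilde ` U)"

definition mero_eq_cov :: "(complex \<times> real \<Rightarrow> 'a) \<Rightarrow> (complex \<times> real \<Rightarrow> 'a) \<Rightarrow> (complex \<times> real) set \<Rightarrow> bool" where
  "mero_eq_cov f g U \<longleftrightarrow> (\<forall>w \<in> ltilde ` U. \<forall>\<^sub>F u in at w. f (lexp u) = g (lexp u))"

text \<open>GL_n(M(U)) on the cover: meromorphic entries, determinant invertible in M(U)
  (its germ is not zero at any point).\<close>
definition GL_mero_cov :: "(complex \<times> real \<Rightarrow> complex^'n^'n) \<Rightarrow> (complex \<times> real) set \<Rightarrow> bool" where
  "GL_mero_cov M U \<longleftrightarrow>
     (\<forall>i j. mero_cov (\<lambda>x. M x $ i $ j) U) \<and>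
     (\<forall>w \<in> ltilde ` U. \<not> (\<forall>\<^sub>F u in at w. det (M (lexp u)) = 0))"

definition GL_mero :: "(complex \<Rightarrow> complex^'n^'n) \<Rightarrow> complex set \<Rightarrow> bool" where
  "GL_mero M V \<longleftrightarrow>
     (\<forall>i j. (\<lambda>z. M z $ i $ j) meromorphic_on V) \<and>
     (\<forall>w \<in> V. \<not> (\<forall>\<^sub>F u in at w. det (M u) = 0))"

text \<open>GL_n(M(P^1 \ closed disc)): meromorphic on |z|>1 and at infinity
  (via the coordinate 1/z at 0).\<close>
definition GL_mero_inf :: "(complex \<Rightarrow> complex^'n^'n) \<Rightarrow> bool" where
  "GL_mero_inf M \<longleftrightarrow>
     GL_mero M {z. norm z > 1} \<and>
     (\<forall>i j. (\<lambda>z. M (inverse z) $ i $ j) meromorphic_on {0}) \<and>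
     \<not> (\<forall>\<^sub>F u in at 0. det (M (inverse u)) = 0)"

definition is_object_C ::
  "nat \<Rightarrow> complex^'n^'n \<Rightarrow> complex^'n^'n \<Rightarrow> complex^'n^'n \<Rightarrow>
   (complex \<times> real \<Rightarrow> complex^'n^'n) \<Rightarrow> (complex \<times> real \<Rightarrow> complex^'n^'n) \<Rightarrow> bool" where
  "is_object_C p A0 A1 Ainf M0 Minf \<longleftrightarrow>
     invertible A0 \<and> invertible A1 \<and> invertible Ainf \<and>
     GL_mero_cov M0 Sigma0 \<and> GL_mero_cov Minf SigmaInf \<and>
     mero_eq_cov (\<lambda>x. M0 (phiT p x)) (\<lambda>x. A1 ** M0 x ** matrix_inv A0) Sigma0 \<and>
     mero_eq_cov (\<lambda>x. Minf (phiT p x)) (\<lambda>x. A1 ** Minf x ** matrix_inv Ainf) SigmaInf \<and>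
     (\<exists>W1 W0 Winf.
        GL_mero_cov W1 ctilde \<and> GL_mero W0 (ball 0 1) \<and> GL_mero_inf Winf \<and>
        mero_eq_cov (\<lambda>x. W1 x ** M0 x) (\<lambda>x. W0 (piT x)) Sigma0 \<and>
        mero_eq_cov (\<lambda>x. W1 x ** Minf x) (\<lambda>x. Winf (piT x)) SigmaInf)"

definition sing_locus :: "(complex \<times> real \<Rightarrow> complex^'n^'n) \<Rightarrow> (complex \<times> real) set \<Rightarrow> (complex \<times> real) set" where
  "sing_locus M U = {x \<in> U.
      (\<exists>i j. is_pole (\<lambda>u. M (lexp u) $ i $ j) (ltilde x)) \<or>
      ((\<lambda>u. det (M (lexp u))) \<longlongrightarrow> 0) (at (ltilde x))}"

definition Epow :: "nat \<Rightarrow> complex set \<Rightarrow> int \<Rightarrow> complex set" where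
  "Epow p E k = (if k \<ge> 0 then (\<lambda>z. z ^ (p ^ nat k)) ` E
                 else {z. z ^ (p ^ nat (- k)) \<in> E})"

definition Etilde :: "nat \<Rightarrow> complex set \<Rightarrow> (complex \<times> real) set" where
  "Etilde p E = {x \<in> ctilde. piT x \<in> (\<Union>k::int. Epow p E k)}"

end

theory Submission
  imports Defs
begin

no_notation fps_nth (infixl \<open>$\<close> 75)



type_synonym 'n mat = "complex^'n^'n"

lemma matrix_inv_both:
  fixes A :: "complex^'n^'n"
  assumes "invertible A"
  shows "A ** matrix_inv A = mat 1" "matrix_inv A ** A = mat 1"
proof -
  have "\<exists>A'. A ** A' = mat 1 \<and> A' ** A = mat 1" using assms unfolding invertible_def by blast
  from someI_ex[OF this] show "A ** matrix_inv A = mat 1" "matrix_inv A ** A = mat 1"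
    unfolding matrix_inv_def by auto
qed

lemma matrix_inv_det:
  fixes A :: "complex^'n^'n"
  assumes "det A \<noteq> 0"
  shows "A ** matrix_inv A = mat 1" "matrix_inv A ** A = mat 1"
  using matrix_inv_both invertible_det_nz assms by blast+

definition cram :: "complex^'n^'n \<Rightarrow> complex^'n^'n" where
  "cram A = (\<chi> k j. det (\<chi> i jj. if jj = k then (mat 1 :: complex^'n^'n) $ i $ j else A $ i $ jj) / det A)"

lemma matrix_inv_cram:
  fixes A :: "complex^'n^'n"
  assumes "det A \<noteq> 0"
  shows "matrix_inv A = cram A"
proof -
  have AB: "A ** matrix_inv A = mat 1" using matrix_inv_det[OF assms] by simp
  show ?thesis
  proof (rule vec_eq_iff[THEN iffD2], intro allI, rule vec_eq_iff[THEN iffD2], intro allI)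
    fix k j
    define x where "x = (\<chi> kk. matrix_inv A $ kk $ j)"
    define b where "b = (\<chi> i. (mat 1 :: complex^'n^'n) $ i $ j)"
    have "A *v x = b"
    proof (rule vec_eq_iff[THEN iffD2], intro allI)
      fix i
      have "(A *v x) $ i = (A ** matrix_inv A) $ i $ j"
        unfolding x_def by (simp add: matrix_vector_mult_def matrix_matrix_mult_def)
      thus "(A *v x) $ i = b $ i" unfolding b_def AB by simp
    qed
    hence "x = (\<chi> k. det(\<chi> i jj. if jj=k then b$i else A$i$jj) / det A)"
      using cramer[OF assms] by blast
    hence "x $ k = det(\<chi> i jj. if jj=k then b$i else A$i$jj) / det A" by simp
    moreover have bi: "\<And>i. b $ i = (mat 1 :: complex^'n^'n) $ i $ j" unfolding b_def by simp
    ultimately show "matrix_inv A $ k $ j = cram A $ k $ j"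
      unfolding x_def cram_def by (simp only: bi vec_lambda_beta)
  qed
qed



lemma tendsto_det:
  fixes F :: "'a \<Rightarrow> complex^'n^'n"
  assumes "(F \<longlongrightarrow> L) net"
  shows "((\<lambda>v. det (F v)) \<longlongrightarrow> det L) net"
  unfolding det_def by (intro tendsto_intros assms)

lemma tendsto_mmult:
  fixes F G :: "'a \<Rightarrow> complex^'n^'n"
  assumes "(F \<longlongrightarrow> L) net" "(G \<longlongrightarrow> M) net"
  shows "((\<lambda>v. F v ** G v) \<longlongrightarrow> L ** M) net"
  unfolding matrix_matrix_mult_def
  by (intro vec_tendstoI) (simp, intro tendsto_intros assms)

lemma tendsto_cram:
  fixes F :: "'a \<Rightarrow> complex^'n^'n"
  assumes "(F \<longlongrightarrow> L) net" "det L \<noteq> 0"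
  shows "((\<lambda>v. cram (F v)) \<longlongrightarrow> cram L) net"
proof -
  have ent: "((\<lambda>v. F v $ i $ jj) \<longlongrightarrow> L $ i $ jj) net" for i jj
    by (intro tendsto_vec_nth assms)
  have M: "((\<lambda>v. (\<chi> i jj. if jj = k then (mat 1 :: complex^'n^'n) $ i $ j else F v $ i $ jj))
     \<longlongrightarrow> (\<chi> i jj. if jj = k then (mat 1 :: complex^'n^'n) $ i $ j else L $ i $ jj)) net" for k j
    by (intro vec_tendstoI) (auto simp: ent)
  show ?thesis
    unfolding cram_def
    by (intro vec_tendstoI) (simp, intro tendsto_divide tendsto_det M assms)
qed



definition good :: "(complex \<Rightarrow> complex^'n^'n) \<Rightarrow> complex \<Rightarrow> bool" where
  "good F u \<longleftrightarrow> (\<exists>L. (F \<longlongrightarrow> L) (at u) \<and> det L \<noteq> 0)"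

definition reg :: "(complex \<Rightarrow> complex^'n^'n) \<Rightarrow> complex \<Rightarrow> bool" where
  "reg F u \<longleftrightarrow> isCont F u \<and> det (F u) \<noteq> 0"

lemma reg_good: "reg F u \<Longrightarrow> good F u"
  unfolding reg_def good_def isCont_def by blast

lemma good_ev_det: "good F u \<Longrightarrow> \<forall>\<^sub>F v in at u. det (F v) \<noteq> 0"
  unfolding good_def using tendsto_det tendsto_imp_eventually_ne by blast

lemma good_const: "det (A::complex^'n^'n) \<noteq> 0 \<Longrightarrow> good (\<lambda>_. A) u"
  unfolding good_def by auto

lemma good_mult: "good F u \<Longrightarrow> good G u \<Longrightarrow> good (\<lambda>v. F v ** G v) u"
  unfolding good_def by (auto simp: det_mul intro!: tendsto_mmult)

lemma good_cong: "good F u \<Longrightarrow> \<forall>\<^sub>F v in at u. F v = G v \<Longrightarrow> good G u"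
  unfolding good_def using tendsto_cong by blast

lemma good_inv: "good F u \<Longrightarrow> good (\<lambda>v. matrix_inv (F v)) u"
proof -
  assume g: "good F u"
  then obtain L where L: "(F \<longlongrightarrow> L) (at u)" "det L \<noteq> 0" unfolding good_def by blast
  have ev: "\<forall>\<^sub>F v in at u. cram (F v) = matrix_inv (F v)"
    using good_ev_det[OF g] by eventually_elim (simp add: matrix_inv_cram)
  have "((\<lambda>v. cram (F v)) \<longlongrightarrow> cram L) (at u)" by (rule tendsto_cram[OF L])
  moreover have "det (cram L) \<noteq> 0"
  proof -
    have "L ** cram L = mat 1" using matrix_inv_det[OF L(2)] matrix_inv_cram[OF L(2)] by simp
    hence "det L * det (cram L) = 1" by (metis det_mul det_I)
    thus ?thesis by auto
  qed
  ultimately show ?thesis unfolding good_def using tendsto_cong[OF ev] by blast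
qed

lemma good_compose:
  assumes "good F (f u)" "filterlim f (at (f u)) (at u)"
  shows "good (\<lambda>v. F (f v)) u"
  using assms unfolding good_def using filterlim_compose by blast

lemma reg_compose:
  assumes "reg F (f u)" "isCont f u"
  shows "reg (\<lambda>v. F (f v)) u"
  using assms unfolding reg_def using isCont_o2 by blast

lemma good_not_pole:
  assumes "good F u"
  shows "\<not> is_pole (\<lambda>v. F v $ i $ j) u"
proof
  obtain L where L: "(F \<longlongrightarrow> L) (at u)" using assms unfolding good_def by blast
  hence "((\<lambda>v. F v $ i $ j) \<longlongrightarrow> L $ i $ j) (at u)" by (intro tendsto_vec_nth)
  moreover assume "is_pole (\<lambda>v. F v $ i $ j) u"
  ultimately show False unfolding is_pole_def
    using not_tendsto_and_filterlim_at_infinity[of "at u"] by auto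
qed

lemma good_not_det0:
  assumes "good F u"
  shows "\<not> ((\<lambda>v. det (F v)) \<longlongrightarrow> 0) (at u)"
proof
  obtain L where L: "(F \<longlongrightarrow> L) (at u)" "det L \<noteq> 0" using assms unfolding good_def by blast
  hence "((\<lambda>v. det (F v)) \<longlongrightarrow> det L) (at u)" by (intro tendsto_det)
  moreover assume "((\<lambda>v. det (F v)) \<longlongrightarrow> 0) (at u)"
  ultimately show False using L(2) tendsto_unique[of "at u"] by auto
qed

lemma det_mero:
  fixes F :: "complex \<Rightarrow> complex^'n^'n"
  assumes "\<forall>i j. (\<lambda>u. F u $ i $ j) meromorphic_on A"
  shows "(\<lambda>u. det (F u)) meromorphic_on A"
  unfolding det_def using assms by (intro meromorphic_intros) auto

lemma local_reg:
  fixes F :: "complex \<Rightarrow> complex^'n^'n"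
  assumes m: "\<forall>i j. (\<lambda>u. F u $ i $ j) meromorphic_on {z}"
    and nz: "\<not> (\<forall>\<^sub>F u in at z. det (F u) = 0)"
  shows "\<forall>\<^sub>F v in at z. reg F v"
proof -
  have an: "\<forall>\<^sub>F v in at z. (\<lambda>u. F u $ i $ j) analytic_on {v}" for i j
  proof -
    have "isolated_singularity_at (\<lambda>u. F u $ i $ j) z"
      using m meromorphic_on_isolated_singularity by blast
    then obtain r where r: "r > 0" "(\<lambda>u. F u $ i $ j) analytic_on ball z r - {z}"
      unfolding isolated_singularity_at_def by blast
    have "\<forall>\<^sub>F v in at z. v \<in> ball z r - {z}"
      using r(1) eventually_at_in_open[of "ball z r" z] by auto
    thus ?thesis by eventually_elim (use r(2) analytic_on_subset in blast)
  qed
  have an2: "\<forall>\<^sub>F v in at z. \<forall>i j. (\<lambda>u. F u $ i $ j) analytic_on {v}"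
    by (intro eventually_all_finite an)
  have dm: "(\<lambda>u. det (F u)) meromorphic_on {z}" using det_mero[OF m] .
  have dnz: "\<forall>\<^sub>F v in at z. det (F v) \<noteq> 0"
  proof (rule ccontr)
    assume "\<not> (\<forall>\<^sub>F v in at z. det (F v) \<noteq> 0)"
    hence "frequently (\<lambda>v. det (F v) = 0) (at z)" by (simp add: frequently_def)
    hence "\<forall>\<^sub>F v in at z. det (F v) = 0"
      using not_essential_frequently_0_imp_eventually_0 dm
        meromorphic_on_isolated_singularity meromorphic_on_not_essential by blast
    with nz show False by blast
  qed
  from an2 dnz show ?thesis
  proof eventually_elim
    case (elim v)
    have "(F \<longlongrightarrow> F v) (at v)"
      by (intro vec_tendstoI) (use elim analytic_at_imp_isCont isCont_def in blast)
    thus ?case using elim unfolding reg_def isCont_def by blast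
  qed
qed

lemma finite_bad:
  fixes K :: "complex set"
  assumes "compact K" "\<And>z. \<forall>\<^sub>F v in at z. P v"
  shows "finite {z\<in>K. \<not> P z}"
proof -
  have "\<not> z islimpt {z. \<not> P z}" for z
    using assms(2)[of z] by (simp add: islimpt_conv_frequently_at frequently_def)
  hence "finite (K \<inter> {z. \<not> P z})" by (intro finite_not_islimpt_in_compact assms)
  thus ?thesis by (simp add: Int_def)
qed


lemma flim_scale:
  fixes c :: complex
  assumes "c \<noteq> 0"
  shows "filterlim (\<lambda>v. c * v) (at (c * u)) (at u)"
proof (rule filterlim_atI)
  show "((\<lambda>v. c * v) \<longlongrightarrow> c * u) (at u)" by (intro tendsto_intros)
  have "\<forall>\<^sub>F v in at u. v \<noteq> u" by (simp add: eventually_at_filter)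
  thus "\<forall>\<^sub>F v in at u. c * v \<noteq> c * u" by eventually_elim (use assms in auto)
qed

lemma flim_add:
  fixes c :: complex
  shows "filterlim (\<lambda>v. v + c) (at (u + c)) (at u)"
proof (rule filterlim_atI)
  show "((\<lambda>v. v + c) \<longlongrightarrow> u + c) (at u)" by (intro tendsto_intros)
  have "\<forall>\<^sub>F v in at u. v \<noteq> u" by (simp add: eventually_at_filter)
  thus "\<forall>\<^sub>F v in at u. v + c \<noteq> u + c" by eventually_elim auto
qed

lemma flim_inverse:
  fixes z :: complex
  assumes "z \<noteq> 0"
  shows "filterlim inverse (at (inverse z)) (at z)"
proof (rule filterlim_atI)
  show "(inverse \<longlongrightarrow> inverse z) (at z)" using assms by (intro tendsto_intros) auto
  have "\<forall>\<^sub>F v in at z. v \<noteq> z" by (simp add: eventually_at_filter)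
  thus "\<forall>\<^sub>F v in at z. inverse v \<noteq> inverse z" by eventually_elim auto
qed

lemma flim_exp:
  fixes u :: complex
  shows "filterlim exp (at (exp u)) (at u)"
proof (rule filterlim_atI)
  show "(exp \<longlongrightarrow> exp u) (at u)" by (intro tendsto_intros)
  have "\<forall>\<^sub>F v in at u. v \<noteq> u \<and> dist v u < 1"
    unfolding eventually_at by (rule exI[of _ 1]) auto
  thus "\<forall>\<^sub>F v in at u. exp v \<noteq> exp u"
  proof eventually_elim
    case (elim v)
    show ?case
    proof
      assume "exp v = exp u"
      then obtain n :: int where n: "v = u + (of_int (2 * n) * pi) * \<i>" using exp_eq by blast
      have "n \<noteq> 0" using elim n by auto
      hence "1 \<le> \<bar>real_of_int n\<bar>" by linarith
      have "dist v u = norm ((of_int (2 * n) * pi) * \<i>)" using n by (simp add: dist_norm)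
      also have "\<dots> = 2 * \<bar>real_of_int n\<bar> * pi" by (simp add: norm_mult abs_mult)
      also have "\<dots> \<ge> 2 * pi" using \<open>1 \<le> \<bar>real_of_int n\<bar>\<close> pi_gt_zero by simp
      finally show False using elim pi_gt3 by linarith
    qed
  qed
qed

lemma inv_cancel:
  fixes A Y :: "complex^'n^'n"
  assumes "det A \<noteq> 0"
  shows "matrix_inv A ** (A ** Y) = Y" "A ** (matrix_inv A ** Y) = Y"
    "matrix_inv A ** A = mat 1" "A ** matrix_inv A = mat 1"
  using matrix_inv_det[OF assms] by (simp_all add: matrix_mul_assoc)


lemma side0:
  fixes m w V :: "complex \<Rightarrow> complex^'n^'n" and p :: nat
  assumes p: "p \<ge> 2"
  and A0: "det A0 \<noteq> 0" and A1: "det A1 \<noteq> 0"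
  and H1: "\<And>u. Re u < 0 \<Longrightarrow> \<forall>\<^sub>F v in at u. m (of_nat p * v) = A1 ** m v ** matrix_inv A0"
  and H2: "\<And>u. Re u < 0 \<Longrightarrow> \<forall>\<^sub>F v in at u. w v ** m v = V (exp v)"
  and H3: "\<And>u. \<forall>\<^sub>F v in at u. reg w v"
  and H4: "\<And>z. z \<in> ball 0 1 \<Longrightarrow> \<forall>\<^sub>F y in at z. reg V y"
  shows "\<exists>E. finite E \<and> E \<subseteq> ball 0 1 - {0} \<and>
           (\<forall>u. Re u < 0 \<longrightarrow> \<not> good m u \<longrightarrow> (\<exists>k. exp u \<in> Epow p E k))"
proof -
  define P :: complex where "P = of_nat p"
  have P0: "P \<noteq> 0" using p unfolding P_def by auto
  have ReP: "Re (P * v) = real p * Re v" for v unfolding P_def by simp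
  have p1: "real p > 1" using p by simp
  define Ve where "Ve = (\<lambda>v. V (exp v))"
  define T where "T = (\<lambda>v. Ve (P * v) ** A0 ** matrix_inv (Ve v))"
  have flP: "filterlim (\<lambda>v. P * v) (at (P * u)) (at u)" for u using flim_scale[OF P0] .
  have flPi: "filterlim (\<lambda>v. inverse P * v) (at v) (at (P * v))" for v
    using flim_scale[of "inverse P" "P * v"] P0 by (simp add: field_simps)
  obtain c where c: "c < 0" "\<And>v. Re v < c \<Longrightarrow> reg Ve v"
  proof -
    from H4[of 0] obtain d where d: "d > 0" "\<And>y. y \<noteq> 0 \<and> dist y 0 < d \<longrightarrow> reg V y"
      unfolding eventually_at by auto
    define c where "c = min (-1) (ln d)"
    have "reg Ve v" if "Re v < c" for v
    proof -
      have "Re v < ln d" using that unfolding c_def by simp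
      hence "exp (Re v) < exp (ln d)" by simp
      hence "norm (exp v) < d" using d(1) by simp
      hence "reg V (exp v)" using d(2)[of "exp v"] by (simp add: dist_norm)
      thus ?thesis unfolding Ve_def by (rule reg_compose) (intro continuous_intros)
    qed
    thus ?thesis using that[of c] unfolding c_def by auto
  qed
  obtain \<delta> where \<delta>: "\<delta> > 0" "\<And>y. y \<noteq> 0 \<Longrightarrow> norm y < \<delta> \<Longrightarrow> reg w y"
    using H3[of 0] unfolding eventually_at by (auto simp: dist_norm)
  have EV: "\<forall>\<^sub>F v in at u. m (P * v) = A1 ** m v ** matrix_inv A0 \<and> w v ** m v = Ve v \<and>
       w (P * v) ** m (P * v) = Ve (P * v) \<and> det (w v) \<noteq> 0 \<and> det (Ve v) \<noteq> 0" if u: "Re u < 0" for u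
  proof -
    have a: "\<forall>\<^sub>F v in at u. m (P * v) = A1 ** m v ** matrix_inv A0" using H1[OF u] unfolding P_def .
    have b: "\<forall>\<^sub>F v in at u. w v ** m v = Ve v" using H2[OF u] unfolding Ve_def .
    have "Re (P * u) < 0" using u p1 ReP by (simp add: mult_pos_neg)
    from eventually_compose_filterlim[OF H2[OF this] flP]
    have cc: "\<forall>\<^sub>F v in at u. w (P * v) ** m (P * v) = Ve (P * v)" unfolding Ve_def .
    have d: "\<forall>\<^sub>F v in at u. det (w v) \<noteq> 0" using H3[of u] by eventually_elim (simp add: reg_def)
    have "exp u \<in> ball 0 1" using u by simp
    from eventually_compose_filterlim[OF H4[OF this] flim_exp]
    have e: "\<forall>\<^sub>F v in at u. det (Ve v) \<noteq> 0" by eventually_elim (simp add: reg_def Ve_def)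
    from a b cc d e show ?thesis by eventually_elim blast
  qed
  have FM: "\<forall>\<^sub>F v in at u. m v = matrix_inv (w v) ** Ve v" if u: "Re u < 0" for u
    using EV[OF u]
  proof eventually_elim
    case (elim v)
    hence "matrix_inv (w v) ** Ve v = matrix_inv (w v) ** (w v ** m v)" by simp
    also have "\<dots> = m v" using elim inv_cancel(1) by blast
    finally show ?case by simp
  qed
  have FT: "\<forall>\<^sub>F v in at u. T v = w (P * v) ** A1 ** matrix_inv (w v)" if u: "Re u < 0" for u
    using EV[OF u] FM[OF u]
  proof eventually_elim
    case (elim v)
    have mv: "m v = matrix_inv (w v) ** Ve v" using elim by blast
    have "Ve (P * v) = w (P * v) ** (A1 ** m v ** matrix_inv A0)" using elim by metis
    hence "T v = w (P * v) ** (A1 ** m v ** matrix_inv A0) ** A0 ** matrix_inv (Ve v)"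
      unfolding T_def by simp
    also have "\<dots> = w (P * v) ** (A1 ** (matrix_inv (w v) ** (Ve v ** (matrix_inv A0 ** (A0 ** matrix_inv (Ve v))))))"
      unfolding mv by (simp only: matrix_mul_assoc)
    also have "\<dots> = w (P * v) ** A1 ** matrix_inv (w v)"
      using elim A0 by (simp add: inv_cancel matrix_mul_assoc)
    finally show ?case .
  qed
  have FTV: "\<forall>\<^sub>F v in at u. T v ** Ve v = Ve (P * v) ** A0" if u: "Re u < 0" for u
    using EV[OF u]
  proof eventually_elim
    case (elim v)
    thus ?case unfolding T_def using inv_cancel(3)[of "Ve v"] by (simp add: matrix_mul_assoc[symmetric])
  qed
  have goodwP: "good (\<lambda>y. w (P * y)) v" if "good w (P * v)" for v
    using good_compose[of w "\<lambda>y. P * y" v] that flP by simp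
  have goodVeP: "good (\<lambda>y. Ve (P * y)) v" if "good Ve (P * v)" for v
    using good_compose[of Ve "\<lambda>y. P * y" v] that flP by simp
  have G_T: "good T v" if "Re v < 0" "good w v" "good w (P * v)" for v
  proof -
    have "good (\<lambda>y. w (P * y) ** A1 ** matrix_inv (w y)) v"
      by (intro good_mult good_inv good_const A1 goodwP that)
    thus ?thesis by (rule good_cong) (use FT[OF that(1)] in \<open>eventually_elim, simp\<close>)
  qed
  have G_M: "good m u" if "Re u < 0" "good w u" "good Ve u" for u
  proof -
    have "good (\<lambda>y. matrix_inv (w y) ** Ve y) u" by (intro good_mult good_inv that)
    thus ?thesis by (rule good_cong) (use FM[OF that(1)] in \<open>eventually_elim, simp\<close>)
  qed
  have G_A: "good Ve v" if "Re v < 0" "good T v" "good Ve (P * v)" for v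
  proof -
    have "good (\<lambda>y. matrix_inv (T y) ** (Ve (P * y) ** A0)) v"
      by (intro good_mult good_inv good_const A0 goodVeP that)
    moreover have "\<forall>\<^sub>F y in at v. matrix_inv (T y) ** (Ve (P * y) ** A0) = Ve y"
      using FTV[OF that(1)] good_ev_det[OF that(2)]
    proof eventually_elim
      case (elim y)
      thus ?case using inv_cancel(1)[of "T y" "Ve y"] by simp
    qed
    ultimately show ?thesis by (rule good_cong)
  qed
  have G_B: "good w (P * v)" if "Re v < 0" "good T v" "good w v" for v
  proof -
    have "good (\<lambda>y. T y ** w y ** matrix_inv A1) v"
      by (intro good_mult good_inv good_const A1 that)
    moreover have "\<forall>\<^sub>F y in at v. T y ** w y ** matrix_inv A1 = w (P * y)"
      using FT[OF that(1)] EV[OF that(1)]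
    proof eventually_elim
      case (elim y)
      have "T y ** w y ** matrix_inv A1 = w (P * y) ** (A1 ** (matrix_inv (w y) ** (w y ** matrix_inv A1)))"
        using elim by (simp add: matrix_mul_assoc)
      also have "\<dots> = w (P * y)" using elim A1 by (simp add: inv_cancel)
      finally show ?case .
    qed
    ultimately have "good (\<lambda>y. w (P * y)) v" by (rule good_cong)
    have fl: "filterlim (\<lambda>z. inverse P * z) (at (inverse P * (P * v))) (at (P * v))"
      by (rule flim_scale) (use P0 in simp)
    have h: "inverse P * (P * v) = v" using P0 by simp
    have h2: "(\<lambda>z. w (P * (inverse P * z))) = w" using P0 by (simp add: mult.assoc[symmetric])
    have "good (\<lambda>y. w (P * y)) (inverse P * (P * v))" unfolding h by fact
    from good_compose[OF this fl] show ?thesis unfolding h2 .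
  qed
  have Tper: "T (y + \<i> * (of_int k * (of_real pi * 2))) = T y" for y k
  proof -
    have "P * (y + \<i> * (of_int k * (of_real pi * 2))) = P * y + \<i> * (of_int (int p * k) * (of_real pi * 2))"
      unfolding P_def by (simp add: algebra_simps)
    hence "exp (P * (y + \<i> * (of_int k * (of_real pi * 2)))) = exp (P * y)"
      by (simp only: exp_plus_2pin)
    moreover have "exp (y + \<i> * (of_int k * (of_real pi * 2))) = exp y" by (rule exp_plus_2pin)
    ultimately show ?thesis unfolding T_def Ve_def by simp
  qed
  have Tshift: "good T (v + \<i> * (of_int k * (of_real pi * 2)))" if "good T v" for v k
  proof -
    define c where "c = \<i> * (of_int k * (of_real pi * 2))"
    have "filterlim (\<lambda>y. y + (-c)) (at ((v + c) + (-c))) (at (v + c))" by (rule flim_add)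
    hence "good (\<lambda>y. T (y + (-c))) (v + c)" using good_compose[of T "\<lambda>y. y + (-c)" "v + c"] that by simp
    moreover have "T (y + (-c)) = T y" for y
      using Tper[of "y + (-c)" k] unfolding c_def by simp
    ultimately show ?thesis unfolding c_def by simp
  qed
  define K :: "complex set" where "K = cbox (Complex c 0) (Complex 0 (2*pi))"
  have Kc: "compact K" unfolding K_def by simp
  define E where "E = exp ` ({v\<in>K. \<not> reg w v} \<union> {v\<in>K. \<not> reg w (P * v)}) \<inter> (ball 0 1 - {0})"
  have finE: "finite E"
  proof -
    have "finite {v\<in>K. \<not> reg w v}" by (rule finite_bad[OF Kc H3])
    moreover have "finite {v\<in>K. \<not> reg w (P * v)}"
      by (rule finite_bad[OF Kc]) (rule eventually_compose_filterlim[OF H3 flP])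
    ultimately show ?thesis unfolding E_def by auto
  qed
  have TE: "exp v \<in> E" if v: "Re v < 0" "\<not> good T v" for v
  proof -
    have "Re v \<ge> c"
    proof (rule ccontr)
      assume "\<not> Re v \<ge> c"
      hence lt: "Re v < c" by simp
      have "Re (P * v) < c" using lt v(1) p1 ReP[of v]
        by (smt (verit) mult_less_cancel_right2)
      have "good (\<lambda>y. Ve (P * y) ** A0 ** matrix_inv (Ve y)) v"
        by (intro good_mult good_inv good_const A0 goodVeP reg_good c(2) lt \<open>Re (P * v) < c\<close>)
      thus False using v(2) unfolding T_def by simp
    qed
    define k :: int where "k = - floor (Im v / (2*pi))"
    define v' where "v' = v + \<i> * (of_int k * (of_real pi * 2))"
    have Imv': "Im v' = Im v + 2 * pi * k" unfolding v'_def by simp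
    have f1: "real_of_int (floor (Im v / (2*pi))) \<le> Im v / (2*pi)" 
      and f2: "Im v / (2*pi) < real_of_int (floor (Im v / (2*pi))) + 1" by linarith+
    have "real_of_int (floor (Im v / (2*pi))) * (2*pi) \<le> Im v"
      using f1 pi_gt_zero by (simp add: le_divide_eq)
    moreover have "Im v < (real_of_int (floor (Im v / (2*pi))) + 1) * (2*pi)"
      using f2 pi_gt_zero by (simp only: divide_less_eq)
    ultimately have "0 \<le> Im v'" "Im v' \<le> 2 * pi" unfolding Imv' k_def
      by (auto simp: algebra_simps)
    moreover have "Re v' = Re v" unfolding v'_def by simp
    ultimately have v'K: "v' \<in> K" using \<open>Re v \<ge> c\<close> v(1) unfolding K_def cbox_complex_eq by auto
    have "\<not> good T v'"
    proof
      assume "good T v'"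
      from Tshift[OF this, of "-k"] show False using v(2) unfolding v'_def
        by (simp add: algebra_simps)
    qed
    hence "\<not> good w v' \<or> \<not> good w (P * v')" using G_T \<open>Re v' = Re v\<close> v(1) by auto
    hence "\<not> reg w v' \<or> \<not> reg w (P * v')" using reg_good by blast
    moreover have "exp v' = exp v" unfolding v'_def by (rule exp_plus_2pin)
    moreover have "exp v \<in> ball 0 1 - {0}" using v(1) by simp
    ultimately have "v' \<in> {v\<in>K. \<not> reg w v} \<union> {v\<in>K. \<not> reg w (P * v)}" "exp v = exp v'"
      "exp v \<in> ball 0 1 - {0}" using v'K by auto
    hence "exp v \<in> exp ` ({v\<in>K. \<not> reg w v} \<union> {v\<in>K. \<not> reg w (P * v)})"
      by (intro image_eqI) 
    thus ?thesis unfolding E_def using \<open>exp v \<in> ball 0 1 - {0}\<close> by (rule IntI)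
  qed
  have CA: "\<forall>v. Re v < 0 \<and> real p ^ n * Re v < c \<longrightarrow> \<not> good Ve v \<longrightarrow> (\<exists>j. exp v ^ (p ^ j) \<in> E)" for n
  proof (induction n)
    case 0
    then show ?case using c(2) reg_good by auto
  next
    case (Suc n)
    show ?case
    proof (intro allI impI)
      fix v assume v: "Re v < 0 \<and> real p ^ Suc n * Re v < c" and ng: "\<not> good Ve v"
      show "\<exists>j. exp v ^ (p ^ j) \<in> E"
      proof (cases "good T v")
        case False
        thus ?thesis using TE v by (intro exI[of _ 0]) auto
      next
        case True
        hence "\<not> good Ve (P * v)" using G_A v ng by blast
        moreover have "Re (P * v) < 0" using v p1 ReP by (simp add: mult_pos_neg)
        moreover have "real p ^ n * Re (P * v) < c" using v unfolding ReP[of v] by (simp add: mult_ac)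
        ultimately obtain j where "exp (P * v) ^ (p ^ j) \<in> E" using Suc.IH by blast
        moreover have "exp (P * v) = exp v ^ p" unfolding P_def by (rule exp_of_nat_mult)
        ultimately have "exp v ^ (p ^ Suc j) \<in> E" by (simp add: power_mult[symmetric] mult.commute)
        thus ?thesis by blast
      qed
    qed
  qed
  have CB: "\<forall>y. Re y < 0 \<and> norm y < \<delta> * real p ^ n \<longrightarrow> \<not> good w y \<longrightarrow> (\<exists>j. \<exists>e\<in>E. exp y = e ^ (p ^ j))" for n
  proof (induction n)
    case 0
    show ?case
    proof (intro allI impI)
      fix y assume y: "Re y < 0 \<and> norm y < \<delta> * real p ^ 0" and ng: "\<not> good w y"
      have "y \<noteq> 0" using y by auto
      hence "reg w y" using \<delta>(2) y by simp
      thus "\<exists>j. \<exists>e\<in>E. exp y = e ^ (p ^ j)" using ng reg_good by blast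
    qed
  next
    case (Suc n)
    show ?case
    proof (intro allI impI)
      fix y assume y: "Re y < 0 \<and> norm y < \<delta> * real p ^ Suc n" and ng: "\<not> good w y"
      define v where "v = inverse P * y"
      have yv: "y = P * v" unfolding v_def using P0 by simp
      have "real p * Re v < 0" using y unfolding yv ReP by simp
      hence Rev: "Re v < 0" using p1 by (simp add: mult_less_0_iff)
      have nv: "norm y = real p * norm v" unfolding yv P_def by (simp add: norm_mult)
      have "real p * norm v < real p * (\<delta> * real p ^ n)" using y unfolding nv by (simp add: mult_ac)
      hence nv2: "norm v < \<delta> * real p ^ n" using p1 by simp
      have ev: "exp y = exp v ^ p" unfolding yv P_def by (rule exp_of_nat_mult)
      show "\<exists>j. \<exists>e\<in>E. exp y = e ^ (p ^ j)"
      proof (cases "good T v")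
        case False
        hence "exp v \<in> E" using TE Rev by blast
        thus ?thesis using ev by (intro exI[of _ 1]) auto
      next
        case True
        have "\<not> good w v" using G_B[OF Rev True] ng unfolding yv by blast
        then obtain j e where "e \<in> E" "exp v = e ^ (p ^ j)" using Suc.IH Rev nv2 by blast
        hence "exp y = e ^ (p ^ Suc j)" using ev by (simp add: power_mult[symmetric] mult.commute)
        thus ?thesis using \<open>e \<in> E\<close> by blast
      qed
    qed
  qed
  have "\<exists>k. exp u \<in> Epow p E k" if u: "Re u < 0" "\<not> good m u" for u
  proof -
    have "\<not> good w u \<or> \<not> good Ve u" using G_M u by blast
    thus ?thesis
    proof
      assume "\<not> good w u"
      obtain n where "norm u / \<delta> < real p ^ n" using real_arch_pow[OF p1] by blast
      hence "norm u < \<delta> * real p ^ n" using \<delta>(1) by (simp add: field_simps)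
      then obtain j e where "e \<in> E" "exp u = e ^ (p ^ j)" using CB u \<open>\<not> good w u\<close> by blast
      hence "exp u \<in> Epow p E (int j)" unfolding Epow_def by auto
      thus ?thesis by blast
    next
      assume "\<not> good Ve u"
      obtain n where n: "c / Re u < real p ^ n" using real_arch_pow[OF p1] by blast
      have "real p ^ n * Re u < c"
      proof -
        have "c / Re u * Re u = c" using u(1) by simp
        moreover have "real p ^ n * Re u < c / Re u * Re u"
          using n u(1) by (intro mult_strict_right_mono_neg) auto
        ultimately show ?thesis by simp
      qed
      then obtain j where j: "exp u ^ (p ^ j) \<in> E" using CA u \<open>\<not> good Ve u\<close> by blast
      show ?thesis
      proof (cases "j = 0")
        case True
        hence "exp u \<in> Epow p E 0" using j unfolding Epow_def by (auto intro: image_eqI[of _ _ "exp u"])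
        thus ?thesis by blast
      next
        case False
        hence "exp u \<in> Epow p E (- int j)" using j unfolding Epow_def by auto
        thus ?thesis by blast
      qed
    qed
  qed
  thus ?thesis using finE unfolding E_def by blast
qed


lemma ltilde_lexp [simp]: "ltilde (lexp u) = u"
  unfolding ltilde_def lexp_def by (simp add: complex_eq_iff)

lemma lexp_ctilde [simp]: "lexp u \<in> ctilde"
  unfolding lexp_def ctilde_def by (auto intro!: exI[of _ "exp (Re u)"] simp: exp_eq_polar)

lemma lexp_ltilde:
  assumes "x \<in> ctilde" shows "lexp (ltilde x) = x"
proof -
  obtain z b r where x: "x = (z, b)" "r > 0" "z = complex_of_real r * cis b"
    using assms unfolding ctilde_def by auto
  have "norm z = r" using x by (simp add: norm_mult)
  hence "ltilde x = complex_of_real (ln r) + \<i> * complex_of_real b" unfolding ltilde_def x by simp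
  hence "exp (ltilde x) = z" using x by (simp add: exp_add cis_conv_exp[symmetric] exp_of_real)
  moreover have "Im (ltilde x) = b" unfolding ltilde_def x by simp
  ultimately show ?thesis unfolding lexp_def x by simp
qed

lemma norm_fst_lexp [simp]: "norm (fst (lexp u)) = exp (Re u)"
  unfolding lexp_def by simp

lemma lexp_Sigma0 [simp]: "lexp u \<in> Sigma0 \<longleftrightarrow> Re u < 0"
  unfolding Sigma0_def by simp

lemma lexp_SigmaInf [simp]: "lexp u \<in> SigmaInf \<longleftrightarrow> Re u > 0"
  unfolding SigmaInf_def by simp

lemma in_image_ltilde: "lexp u \<in> U \<Longrightarrow> u \<in> ltilde ` U"
  by (metis ltilde_lexp image_eqI)

lemma phiT_lexp: "phiT p (lexp u) = lexp (of_nat p * u)"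
  unfolding phiT_def lexp_def by (simp add: exp_of_nat_mult)

lemma piT_lexp [simp]: "piT (lexp u) = exp u"
  unfolding piT_def lexp_def by simp

lemma Re_ltilde_Sigma0: "x \<in> Sigma0 \<Longrightarrow> Re (ltilde x) < 0"
  using lexp_ltilde[of x] lexp_Sigma0[of "ltilde x"] unfolding Sigma0_def by auto

lemma Re_ltilde_SigmaInf: "x \<in> SigmaInf \<Longrightarrow> Re (ltilde x) > 0"
  using lexp_ltilde[of x] lexp_SigmaInf[of "ltilde x"] unfolding SigmaInf_def by auto

lemma Epow_inverse:
  assumes "z \<in> Epow p E k" shows "inverse z \<in> Epow p (inverse ` E) k"
proof (cases "k \<ge> 0")
  case True
  then obtain e where "e \<in> E" "z = e ^ (p ^ nat k)" using assms unfolding Epow_def by auto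
  hence "inverse z = (inverse e) ^ (p ^ nat k)" by (simp add: power_inverse)
  thus ?thesis using True \<open>e \<in> E\<close> unfolding Epow_def by auto
next
  case False
  thus ?thesis using assms unfolding Epow_def by (auto simp: power_inverse)
qed

lemma flim_neg: "filterlim (\<lambda>v. - v) (at (- u)) (at (u::complex))"
  using flim_scale[of "-1" u] by simp


theorem mainTheorem10:
  fixes p :: nat
    and A0 A1 Ainf :: "complex^'n^'n"
    and M0 Minf :: "complex \<times> real \<Rightarrow> complex^'n^'n"
  assumes "p \<ge> 2"
    and "is_object_C p A0 A1 Ainf M0 Minf"
  shows "\<exists>E0 Einf. finite E0 \<and> E0 \<subseteq> ball 0 1 - {0} \<and>
                   finite Einf \<and> Einf \<subseteq> - cball 0 1 \<and>
                   sing_locus M0 Sigma0 \<subseteq> Etilde p E0 \<and>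
                   sing_locus Minf SigmaInf \<subseteq> Etilde p Einf"
proof -
  note obj = assms(2)[unfolded is_object_C_def]
  have dA0: "det A0 \<noteq> 0" and dA1: "det A1 \<noteq> 0" and dAi: "det Ainf \<noteq> 0"
    using obj invertible_det_nz by blast+
  have fe0: "mero_eq_cov (\<lambda>x. M0 (phiT p x)) (\<lambda>x. A1 ** M0 x ** matrix_inv A0) Sigma0"
    and fei: "mero_eq_cov (\<lambda>x. Minf (phiT p x)) (\<lambda>x. A1 ** Minf x ** matrix_inv Ainf) SigmaInf"
    using obj by blast+
  obtain W1 W0 Winf where W1: "GL_mero_cov W1 ctilde" and W0: "GL_mero W0 (ball 0 1)"
    and Wi: "GL_mero_inf Winf"
    and e0: "mero_eq_cov (\<lambda>x. W1 x ** M0 x) (\<lambda>x. W0 (piT x)) Sigma0"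
    and ei: "mero_eq_cov (\<lambda>x. W1 x ** Minf x) (\<lambda>x. Winf (piT x)) SigmaInf"
    using obj by blast
  define w where "w = (\<lambda>u. W1 (lexp u))"
  have H3: "\<forall>\<^sub>F v in at u. reg w v" for u
  proof (rule local_reg)
    have "u \<in> ltilde ` ctilde" by (rule in_image_ltilde) simp
    thus "\<forall>i j. (\<lambda>u. w u $ i $ j) meromorphic_on {u}"
      using W1 unfolding GL_mero_cov_def mero_cov_def w_def o_def
      by (meson empty_subsetI insert_subset meromorphic_on_subset)
    show "\<not> (\<forall>\<^sub>F v in at u. det (w v) = 0)"
      using W1 \<open>u \<in> ltilde ` ctilde\<close> unfolding GL_mero_cov_def w_def by blast
  qed
  obtain E0 where E0: "finite E0" "E0 \<subseteq> ball 0 1 - {0}"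
    "\<And>u. Re u < 0 \<Longrightarrow> \<not> good (\<lambda>u. M0 (lexp u)) u \<Longrightarrow> \<exists>k. exp u \<in> Epow p E0 k"
  proof -
    have "\<exists>E. finite E \<and> E \<subseteq> ball 0 1 - {0} \<and>
           (\<forall>u. Re u < 0 \<longrightarrow> \<not> good (\<lambda>u. M0 (lexp u)) u \<longrightarrow> (\<exists>k. exp u \<in> Epow p E k))"
    proof (rule side0[OF assms(1) dA0 dA1])
      fix u :: complex assume u: "Re u < 0"
      hence uin: "u \<in> ltilde ` Sigma0" by (intro in_image_ltilde) simp
      show "\<forall>\<^sub>F v in at u. M0 (lexp (of_nat p * v)) = A1 ** M0 (lexp v) ** matrix_inv A0"
        using fe0 uin unfolding mero_eq_cov_def phiT_lexp by blast
      show "\<forall>\<^sub>F v in at u. w v ** M0 (lexp v) = W0 (exp v)"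
        using e0 uin unfolding mero_eq_cov_def w_def piT_lexp by blast
    next
      show "\<forall>\<^sub>F v in at u. reg w v" for u by (rule H3)
    next
      fix z :: complex assume z: "z \<in> ball 0 1"
      show "\<forall>\<^sub>F y in at z. reg W0 y"
      proof (rule local_reg)
        show "\<forall>i j. (\<lambda>u. W0 u $ i $ j) meromorphic_on {z}"
          using W0 z unfolding GL_mero_def by (meson empty_subsetI insert_subset meromorphic_on_subset)
        show "\<not> (\<forall>\<^sub>F v in at z. det (W0 v) = 0)" using W0 z unfolding GL_mero_def by blast
      qed
    qed
    thus ?thesis using that by blast
  qed
  obtain E1 where E1: "finite E1" "E1 \<subseteq> ball 0 1 - {0}"
    "\<And>u. Re u < 0 \<Longrightarrow> \<not> good (\<lambda>u. Minf (lexp (- u))) u \<Longrightarrow> \<exists>k. exp u \<in> Epow p E1 k"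
  proof -
    have "\<exists>E. finite E \<and> E \<subseteq> ball 0 1 - {0} \<and>
           (\<forall>u. Re u < 0 \<longrightarrow> \<not> good (\<lambda>u. Minf (lexp (- u))) u \<longrightarrow> (\<exists>k. exp u \<in> Epow p E k))"
    proof (rule side0[OF assms(1) dAi dA1, where w = "\<lambda>u. w (- u)" and V = "\<lambda>z. Winf (inverse z)"])
      fix u :: complex assume u: "Re u < 0"
      hence uin: "- u \<in> ltilde ` SigmaInf" by (intro in_image_ltilde) simp
      have "\<forall>\<^sub>F y in at (- u). Minf (lexp (of_nat p * y)) = A1 ** Minf (lexp y) ** matrix_inv Ainf"
        using fei uin unfolding mero_eq_cov_def phiT_lexp by blast
      from eventually_compose_filterlim[OF this flim_neg]
      show "\<forall>\<^sub>F v in at u. Minf (lexp (- (of_nat p * v))) = A1 ** Minf (lexp (- v)) ** matrix_inv Ainf"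
        by simp
      have "\<forall>\<^sub>F y in at (- u). w y ** Minf (lexp y) = Winf (exp y)"
        using ei uin unfolding mero_eq_cov_def w_def piT_lexp by blast
      from eventually_compose_filterlim[OF this flim_neg]
      show "\<forall>\<^sub>F v in at u. w (- v) ** Minf (lexp (- v)) = Winf (inverse (exp v))"
        by (simp add: exp_minus)
    next
      fix u :: complex
      from eventually_compose_filterlim[OF H3[of "- u"] flim_neg]
      show "\<forall>\<^sub>F v in at u. reg (\<lambda>u. w (- u)) v"
        by eventually_elim (rule reg_compose, simp, intro continuous_intros)
    next
      fix z :: complex assume z: "z \<in> ball 0 1"
      show "\<forall>\<^sub>F y in at z. reg (\<lambda>z. Winf (inverse z)) y"
      proof (cases "z = 0")
        case True
        show ?thesis unfolding True
        proof (rule local_reg)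
          show "\<forall>i j. (\<lambda>u. Winf (inverse u) $ i $ j) meromorphic_on {0}"
            using Wi unfolding GL_mero_inf_def by blast
          show "\<not> (\<forall>\<^sub>F v in at 0. det (Winf (inverse v)) = 0)"
            using Wi unfolding GL_mero_inf_def by blast
        qed
      next
        case False
        have zi: "norm (inverse z) > 1" using z False by (simp add: norm_inverse one_less_inverse)
        have "\<forall>\<^sub>F y in at (inverse z). reg Winf y"
        proof (rule local_reg)
          show "\<forall>i j. (\<lambda>u. Winf u $ i $ j) meromorphic_on {inverse z}"
            using Wi zi unfolding GL_mero_inf_def GL_mero_def
            by (meson empty_subsetI insert_subset meromorphic_on_subset mem_Collect_eq)
          show "\<not> (\<forall>\<^sub>F v in at (inverse z). det (Winf v) = 0)"
            using Wi zi unfolding GL_mero_inf_def GL_mero_def by blast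
        qed
        from eventually_compose_filterlim[OF this flim_inverse[OF False]]
        have "\<forall>\<^sub>F y in at z. reg Winf (inverse y)" .
        moreover have "\<forall>\<^sub>F y in at z. y \<noteq> 0"
          using False by (simp add: eventually_at_in_open' eventually_neq_at_within)
        ultimately show ?thesis
          by eventually_elim (rule reg_compose, simp, intro continuous_intros, simp)
      qed
    qed
    thus ?thesis using that by blast
  qed
  define Einf where "Einf = inverse ` E1"
  have "finite Einf" using E1(1) unfolding Einf_def by simp
  moreover have "Einf \<subseteq> - cball 0 1"
  proof
    fix e assume "e \<in> Einf"
    then obtain e1 where e1: "e1 \<in> E1" "e = inverse e1" unfolding Einf_def by auto
    hence "norm e1 < 1" "e1 \<noteq> 0" using E1(2) by auto
    hence "norm e > 1" using e1 by (simp add: norm_inverse one_less_inverse)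
    thus "e \<in> - cball 0 1" by simp
  qed
  moreover have "sing_locus M0 Sigma0 \<subseteq> Etilde p E0"
  proof
    fix x assume x: "x \<in> sing_locus M0 Sigma0"
    hence xS: "x \<in> Sigma0" unfolding sing_locus_def by simp
    hence xc: "x \<in> ctilde" unfolding Sigma0_def by simp
    define u where "u = ltilde x"
    have Reu: "Re u < 0" using Re_ltilde_Sigma0[OF xS] unfolding u_def .
    have "\<not> good (\<lambda>u. M0 (lexp u)) u"
    proof
      assume g: "good (\<lambda>u. M0 (lexp u)) u"
      show False using x good_not_pole[OF g] good_not_det0[OF g] unfolding sing_locus_def u_def by auto
    qed
    then obtain k where "exp u \<in> Epow p E0 k" using E0(3) Reu by blast
    moreover have "exp u = piT x" using lexp_ltilde[OF xc] unfolding u_def lexp_def piT_def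
      by (metis fst_conv)
    ultimately show "x \<in> Etilde p E0" unfolding Etilde_def using xc by auto
  qed
  moreover have "sing_locus Minf SigmaInf \<subseteq> Etilde p Einf"
  proof
    fix x assume x: "x \<in> sing_locus Minf SigmaInf"
    hence xS: "x \<in> SigmaInf" unfolding sing_locus_def by simp
    hence xc: "x \<in> ctilde" unfolding SigmaInf_def by simp
    define u where "u = ltilde x"
    have Reu: "Re u > 0" using Re_ltilde_SigmaInf[OF xS] unfolding u_def .
    have ng: "\<not> good (\<lambda>u. Minf (lexp u)) u"
    proof
      assume g: "good (\<lambda>u. Minf (lexp u)) u"
      show False using x good_not_pole[OF g] good_not_det0[OF g] unfolding sing_locus_def u_def by auto
    qed
    have "\<not> good (\<lambda>u. Minf (lexp (- u))) (- u)"
    proof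
      assume "good (\<lambda>u. Minf (lexp (- u))) (- u)"
      from good_compose[OF this flim_neg] show False using ng by simp
    qed
    then obtain k where "exp (- u) \<in> Epow p E1 k" using E1(3)[of "- u"] Reu by auto
    hence "inverse (exp (- u)) \<in> Epow p Einf k" unfolding Einf_def by (rule Epow_inverse)
    hence "exp u \<in> Epow p Einf k" by (simp add: exp_minus)
    moreover have "exp u = piT x" using lexp_ltilde[OF xc] unfolding u_def lexp_def piT_def
      by (metis fst_conv)
    ultimately show "x \<in> Etilde p Einf" unfolding Etilde_def using xc by auto
  qed
  ultimately show ?thesis using E0(1,2) by blast
qed

end
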